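(* Let $m \ge 2$, $n\ge 2$, and for $1 \le i \le m$ let $f_i(x) = x^T A_i x + c_i^T x + d_i$ be quadratics on $\mathbb{R}^n$ with $A_i$ symmetric, where $f_1(x) = \|x\|^2 - 1$ (i.e. $A_1 = I$, $c_1 = 0$, $d_1 = -1$). For $2 \le i \le m$ let $U_i > 0$ satisfy $|f_i(x)| \le U_i$ for all $x$ with $\|x\|^2 \le 2$. Consider the system in the real variables $v_0, x_1,\ldots,x_n, s_1,\ldots,s_m, w_2,\ldots,w_m$: $$(\mathrm{a})\quad x^T A_i x + c_i^T v_0 x + d_i v_0^2 + s_i^2 = 0, \quad 1 \le i \le m,$$ $$(\mathrm{b})\quad \frac{s_i^2 + w_i^2}{U_i} - v_0^2 = 0, \quad 2 \le i \le m,$$ $$(\mathrm{c})\quad \|x\|^2 + s_1^2 + \sum_{i=2}^m \frac{s_i^2 + w_i^2}{U_i} + v_0^2 = m+1.$$ Let $0 \le \delta < 1$ and suppose $\hat z = (\hat v_0, \hat x, \hat s, \hat w)$ is $\delta$-feasible for the equations (a) and (b). Then (i) $$m\hat v_0^2 - m\delta \le \|\hat x\|^2 + \hat s_1^2 + \sum_{i=2}^m \frac{\hat s_i^2 + \hat w_i^2}{U_i} \le m \hat v_0^2 + m\delta;$$ (ii) if $\hat z$ is also $\delta$-feasible for (c), then $1 - \delta \le \hat v_0^2 \le 1 + \delta$.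
   Context: A vector is $\delta$-feasible for an equation $h = 0$ if $|h| \le \delta$ at that vector (i.e. it is $\delta$-feasible for both inequalities $h \le 0$ and $-h \le 0$). *)

theory Defs
  imports "HOL-Analysis.Analysis"
begin

definition delta_feasible_eq :: "real \<Rightarrow> real \<Rightarrow> bool" where
  "delta_feasible_eq \<delta> h \<longleftrightarrow> \<bar>h\<bar> \<le> \<delta>"

definition quad :: "real^'n^'n \<Rightarrow> real^'n \<Rightarrow> real \<Rightarrow> real^'n \<Rightarrow> real" where
  "quad A c d x = x \<bullet> (A *v x) + c \<bullet> x + d"

end

theory Submission
  imports Defs
begin

theorem lemma1:
  fixes m :: nat
    and A :: "nat \<Rightarrow> real^'n^'n" and c :: "nat \<Rightarrow> real^'n" and d :: "nat \<Rightarrow> real"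
    and U :: "nat \<Rightarrow> real"
    and \<delta> :: real
    and v0 :: real and x :: "real^'n" and s :: "nat \<Rightarrow> real" and w :: "nat \<Rightarrow> real"
  assumes hm: "m \<ge> 2"
    and hn: "CARD('n) \<ge> 2"
    and hsym: "\<forall>i\<in>{1..m}. transpose (A i) = A i"
    and hA1: "A 1 = mat 1" and hc1: "c 1 = 0" and hd1: "d 1 = -1"
    and hU: "\<forall>i\<in>{2..m}. U i > 0"
    and hUbound: "\<forall>i\<in>{2..m}. \<forall>y::real^'n. norm y ^ 2 \<le> 2 \<longrightarrow> \<bar>quad (A i) (c i) (d i) y\<bar> \<le> U i"
    and hdelta: "0 \<le> \<delta>" "\<delta> < 1"
    and feas_a: "\<forall>i\<in>{1..m}. delta_feasible_eq \<delta>
                   (x \<bullet> (A i *v x) + v0 * (c i \<bullet> x) + d i * v0 ^ 2 + s i ^ 2)"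
    and feas_b: "\<forall>i\<in>{2..m}. delta_feasible_eq \<delta> ((s i ^ 2 + w i ^ 2) / U i - v0 ^ 2)"
  shows "real m * v0 ^ 2 - real m * \<delta>
           \<le> norm x ^ 2 + s 1 ^ 2 + (\<Sum>i=2..m. (s i ^ 2 + w i ^ 2) / U i)
         \<and> norm x ^ 2 + s 1 ^ 2 + (\<Sum>i=2..m. (s i ^ 2 + w i ^ 2) / U i)
           \<le> real m * v0 ^ 2 + real m * \<delta>
         \<and> (delta_feasible_eq \<delta>
               (norm x ^ 2 + s 1 ^ 2 + (\<Sum>i=2..m. (s i ^ 2 + w i ^ 2) / U i) + v0 ^ 2 - (real m + 1))
            \<longrightarrow> 1 - \<delta> \<le> v0 ^ 2 \<and> v0 ^ 2 \<le> 1 + \<delta>)"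
proof -
  have x1: "x \<bullet> (A 1 *v x) = norm x ^ 2"
    unfolding hA1 by (simp add: power2_norm_eq_inner)
  have "1 \<in> {1..m}" using hm by auto
  with feas_a have "\<bar>x \<bullet> (A 1 *v x) + v0 * (c 1 \<bullet> x) + d 1 * v0 ^ 2 + s 1 ^ 2\<bar> \<le> \<delta>"
    unfolding delta_feasible_eq_def by blast
  hence "\<bar>norm x ^ 2 - v0 ^ 2 + s 1 ^ 2\<bar> \<le> \<delta>"
    unfolding x1 hc1 hd1 by simp
  hence h1: "v0^2 - \<delta> \<le> norm x ^ 2 + s 1 ^ 2" "norm x ^ 2 + s 1 ^ 2 \<le> v0^2 + \<delta>" by auto
  have lo: "(\<Sum>i=2..m. v0^2 - \<delta>) \<le> (\<Sum>i=2..m. (s i ^ 2 + w i ^ 2) / U i)"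
    proof (rule sum_mono)
    fix i assume "i \<in> {2..m}"
    with feas_b have "\<bar>(s i ^ 2 + w i ^ 2) / U i - v0 ^ 2\<bar> \<le> \<delta>"
      unfolding delta_feasible_eq_def by blast
    thus "v0^2 - \<delta> \<le> (s i ^ 2 + w i ^ 2) / U i" by (simp add: abs_le_iff)
  qed
  have hi: "(\<Sum>i=2..m. (s i ^ 2 + w i ^ 2) / U i) \<le> (\<Sum>i=2..m. v0^2 + \<delta>)"
    proof (rule sum_mono)
    fix i assume "i \<in> {2..m}"
    with feas_b have "\<bar>(s i ^ 2 + w i ^ 2) / U i - v0 ^ 2\<bar> \<le> \<delta>"
      unfolding delta_feasible_eq_def by blast
    thus "(s i ^ 2 + w i ^ 2) / U i \<le> v0^2 + \<delta>" by (simp add: abs_le_iff)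
  qed
  have card: "real (card {2..m}) = real m - 1" using hm by auto
  have lo': "(real m - 1) * (v0^2 - \<delta>) \<le> (\<Sum>i=2..m. (s i ^ 2 + w i ^ 2) / U i)"
    using lo card by simp
  have hi': "(\<Sum>i=2..m. (s i ^ 2 + w i ^ 2) / U i) \<le> (real m - 1) * (v0^2 + \<delta>)"
    using hi card by simp
  define S where "S = (\<Sum>i=2..m. (s i ^ 2 + w i ^ 2) / U i)"
  have A: "real m * v0 ^ 2 - real m * \<delta> \<le> norm x ^ 2 + s 1 ^ 2 + S"
    using h1 lo' unfolding S_def by (simp add: algebra_simps)
  have B: "norm x ^ 2 + s 1 ^ 2 + S \<le> real m * v0 ^ 2 + real m * \<delta>"
    using h1 hi' unfolding S_def by (simp add: algebra_simps)
  have C: "1 - \<delta> \<le> v0 ^ 2 \<and> v0 ^ 2 \<le> 1 + \<delta>"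
    if "\<bar>norm x ^ 2 + s 1 ^ 2 + S + v0 ^ 2 - (real m + 1)\<bar> \<le> \<delta>"
  proof -
    have m1: "real m + 1 > 0" by simp
    have "(real m + 1) * v0^2 \<ge> (real m + 1) * (1 - \<delta>)"
      using B that by (auto simp: algebra_simps abs_le_iff)
    hence L: "v0^2 \<ge> 1 - \<delta>" using m1 by (simp add: mult_le_cancel_left)
    have "(real m + 1) * v0^2 \<le> (real m + 1) * (1 + \<delta>)"
      using A that by (auto simp: algebra_simps abs_le_iff)
    hence R: "v0^2 \<le> 1 + \<delta>" using m1 by (simp add: mult_le_cancel_left)
    show ?thesis using L R by simp
  qed
  show ?thesis using A B C unfolding S_def delta_feasible_eq_def by blast
qed

end
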